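(* Let $\phi$ be a continuous flow on a compact metric space $X$, and let $Exp(\phi)$ be the set of uniformly-expansive points of $\phi$. Then $Exp(\phi)$ is invariant: $\phi^t(Exp(\phi))\subset Exp(\phi)$ for every $t\in\mathbb{R}$.
   Context: A continuous flow is a continuous map $\phi:\mathbb{R}\times X\to X$, $\phi^t(x)=\phi(t,x)$, with $\phi^0=\mathrm{id}$, $\phi^{t+s}=\phi^s\circ\phi^t$; $O(x)=\{\phi^t(x):t\in\mathbb{R}\}$. A reparametrization is an increasing homeomorphism $h:\mathbb{R}\to\mathbb{R}$ with $h(0)=0$. A point $x$ is uniformly-expansive if there is a neighborhood $U$ of $x$ such that for every $\varepsilon>0$ there is $\delta>0$ such that whenever $y,z\in U$ and some reparametrization $h$ satisfies $d(\phi^t(y),\phi^{h(t)}(z))<\delta$ for all $t\in\mathbb{R}$, then $y=\phi^s(w)$ with $w\in O(z)$ and $|s|<\varepsilon$. *)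

theory Defs
  imports "HOL-Analysis.Analysis"
begin

definition continuous_flow :: "'a::metric_space set \<Rightarrow> (real \<Rightarrow> 'a \<Rightarrow> 'a) \<Rightarrow> bool" where
  "continuous_flow X \<phi> \<longleftrightarrow>
     continuous_on (UNIV \<times> X) (\<lambda>(t, x). \<phi> t x) \<and>
     (\<forall>t. \<forall>x\<in>X. \<phi> t x \<in> X) \<and>
     (\<forall>x\<in>X. \<phi> 0 x = x) \<and>
     (\<forall>t s. \<forall>x\<in>X. \<phi> (t + s) x = \<phi> s (\<phi> t x))"

definition orbit :: "(real \<Rightarrow> 'a \<Rightarrow> 'a) \<Rightarrow> 'a \<Rightarrow> 'a set" where
  "orbit \<phi> x = {\<phi> t x | t. t \<in> (UNIV::real set)}"

definition reparametrization :: "(real \<Rightarrow> real) \<Rightarrow> bool" where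
  "reparametrization h \<longleftrightarrow> strict_mono h \<and> homeomorphism UNIV UNIV h (inv h) \<and> h 0 = 0"

definition uniformly_expansive_point ::
  "'a::metric_space set \<Rightarrow> (real \<Rightarrow> 'a \<Rightarrow> 'a) \<Rightarrow> 'a \<Rightarrow> bool" where
  "uniformly_expansive_point X \<phi> x \<longleftrightarrow> x \<in> X \<and>
     (\<exists>U. U \<subseteq> X \<and> (\<exists>V. openin (top_of_set X) V \<and> x \<in> V \<and> V \<subseteq> U) \<and>
       (\<forall>\<epsilon>>0. \<exists>\<delta>>0. \<forall>y\<in>U. \<forall>z\<in>U. \<forall>h.
          reparametrization h \<and> (\<forall>t. dist (\<phi> t y) (\<phi> (h t) z) < \<delta>) \<longrightarrow>
          (\<exists>s w. w \<in> orbit \<phi> z \<and> \<bar>s\<bar> < \<epsilon> \<and> y = \<phi> s w)))"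

definition Exp :: "'a::metric_space set \<Rightarrow> (real \<Rightarrow> 'a \<Rightarrow> 'a) \<Rightarrow> 'a set" where
  "Exp X \<phi> = {x. uniformly_expansive_point X \<phi> x}"

end

theory Submission
  imports Defs
begin

lemma flow_props:
  assumes "continuous_flow X \<phi>"
  shows "\<And>t x. x \<in> X \<Longrightarrow> \<phi> t x \<in> X"
    and "\<And>x. x \<in> X \<Longrightarrow> \<phi> 0 x = x"
    and "\<And>t s x. x \<in> X \<Longrightarrow> \<phi> s (\<phi> t x) = \<phi> (t + s) x"
    and "\<And>t. continuous_on X (\<phi> t)"
proof -
  show "\<And>t x. x \<in> X \<Longrightarrow> \<phi> t x \<in> X" "\<And>x. x \<in> X \<Longrightarrow> \<phi> 0 x = x"
       "\<And>t s x. x \<in> X \<Longrightarrow> \<phi> s (\<phi> t x) = \<phi> (t + s) x"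
    using assms unfolding continuous_flow_def by auto
  fix t :: real
  have c: "continuous_on (UNIV \<times> X) (\<lambda>(t, x). \<phi> t x)"
    using assms unfolding continuous_flow_def by auto
  have "continuous_on X (\<lambda>x. (t, x))" by (intro continuous_intros)
  moreover have "(\<lambda>x. (t, x)) ` X \<subseteq> UNIV \<times> X" by auto
  ultimately have "continuous_on X ((\<lambda>(t, x). \<phi> t x) \<circ> (\<lambda>x. (t, x)))"
    using continuous_on_compose continuous_on_subset c by blast
  then show "continuous_on X (\<phi> t)" by (simp add: o_def)
qed

lemma reparam_shift:
  assumes "reparametrization h"
  shows "reparametrization (\<lambda>s. h (s - T) - h (- T))"
proof -
  let ?g = "\<lambda>s. h (s - T) - h (- T)"
  let ?k = "\<lambda>u. inv h (u + h (- T)) + T"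
  have sm: "strict_mono h" and hom: "homeomorphism UNIV UNIV h (inv h)"
    using assms unfolding reparametrization_def by auto
  have h1: "\<And>u. h (inv h u) = u" and h2: "\<And>x. inv h (h x) = x"
    and ch: "continuous_on UNIV h" and cih: "continuous_on UNIV (inv h)"
    using hom unfolding homeomorphism_def by auto
  have smg: "strict_mono ?g" using sm unfolding strict_mono_def by auto
  have gk: "\<And>u. ?g (?k u) = u" using h1 by simp
  have kg: "\<And>s. ?k (?g s) = s" using h2 by simp
  have invg: "inv ?g = ?k" by (rule inv_equality) (use gk kg in auto)
  have cg: "continuous_on UNIV ?g"
    by (intro continuous_intros continuous_on_compose2[OF ch]) auto
  have ck: "continuous_on UNIV ?k"
    by (intro continuous_intros continuous_on_compose2[OF cih]) auto
  have "homeomorphism UNIV UNIV ?g ?k"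
    unfolding homeomorphism_def using cg ck gk kg
    by (auto intro: image_eqI[where x="?k _"] image_eqI[where x="?g _"])
  then show ?thesis unfolding reparametrization_def invg using smg by simp
qed

theorem mainTheorem4:
  fixes X :: "'a::metric_space set" and \<phi> :: "real \<Rightarrow> 'a \<Rightarrow> 'a"
  assumes "compact X" and "continuous_flow X \<phi>"
  shows "\<forall>t. \<phi> t ` Exp X \<phi> \<subseteq> Exp X \<phi>"
proof (intro allI subsetI)
  note F = flow_props[OF assms(2)]
  fix T p assume "p \<in> \<phi> T ` Exp X \<phi>"
  then obtain x where xE: "x \<in> Exp X \<phi>" and p: "p = \<phi> T x" by auto
  from xE have xX: "x \<in> X" unfolding Exp_def uniformly_expansive_point_def by auto
  from xE obtain U V where UX: "U \<subseteq> X" and V: "openin (top_of_set X) V" "x \<in> V" "V \<subseteq> U"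
    and ex: "\<forall>\<epsilon>>0. \<exists>\<delta>>0. \<forall>y\<in>U. \<forall>z\<in>U. \<forall>h.
          reparametrization h \<and> (\<forall>t. dist (\<phi> t y) (\<phi> (h t) z) < \<delta>) \<longrightarrow>
          (\<exists>s w. w \<in> orbit \<phi> z \<and> \<bar>s\<bar> < \<epsilon> \<and> y = \<phi> s w)"
    unfolding Exp_def uniformly_expansive_point_def by blast
  from ex[rule_format, OF zero_less_one] obtain \<delta> where dpos: "\<delta> > 0" and
    dH: "\<And>y z h. y\<in>U \<Longrightarrow> z\<in>U \<Longrightarrow> reparametrization h \<Longrightarrow> (\<forall>t. dist (\<phi> t y) (\<phi> (h t) z) < \<delta>) \<Longrightarrow>
          (\<exists>s w. w \<in> orbit \<phi> z \<and> \<bar>s\<bar> < 1 \<and> y = \<phi> s w)" by meson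
  from V obtain e where epos: "e > 0" and eV: "\<forall>x'\<in>X. dist x' x < e \<longrightarrow> x' \<in> V"
    unfolding openin_euclidean_subtopology_iff by blast
  define r where "r = e / 2"
  have rpos: "r > 0" using epos r_def by simp
  define U' where "U' = {q\<in>X. dist (\<phi> (-T) q) x \<le> r}"
  define V' where "V' = X \<inter> vimage (\<phi> (-T)) (ball x r)"
  have bk: "\<And>q. q \<in> X \<Longrightarrow> \<phi> T (\<phi> (-T) q) = q" "\<And>q. q \<in> X \<Longrightarrow> \<phi> (-T) (\<phi> T q) = q"
    using F(2,3) by auto
  have pX: "p \<in> X" using p F(1) xX by auto
  show "p \<in> Exp X \<phi>"
    unfolding Exp_def uniformly_expansive_point_def mem_Collect_eq
  proof (rule conjI, fact, rule exI[of _ U'], intro conjI allI impI)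
    show "U' \<subseteq> X" unfolding U'_def by auto
    show "\<exists>V. openin (top_of_set X) V \<and> p \<in> V \<and> V \<subseteq> U'"
    proof (intro exI[of _ V'] conjI)
      show "openin (top_of_set X) V'" unfolding V'_def
        by (rule continuous_openin_preimage_gen[OF F(4)]) auto
      show "p \<in> V'" unfolding V'_def using p bk(2)[OF xX] pX rpos by auto
      show "V' \<subseteq> U'" unfolding V'_def U'_def by (auto simp: dist_commute)
    qed
    fix \<epsilon> :: real assume "\<epsilon> > 0"
    show "\<exists>\<delta>'>0. \<forall>y'\<in>U'. \<forall>z'\<in>U'. \<forall>h. reparametrization h \<and> (\<forall>t. dist (\<phi> t y') (\<phi> (h t) z') < \<delta>') \<longrightarrow>
          (\<exists>s w. w \<in> orbit \<phi> z' \<and> \<bar>s\<bar> < \<epsilon> \<and> y' = \<phi> s w)"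
    proof (rule exI[of _ "min \<delta> r"], intro conjI ballI allI impI)
      show "min \<delta> r > 0" using dpos rpos by simp
      fix y' z' h assume y': "y' \<in> U'" and z': "z' \<in> U'" and
        hh: "reparametrization h \<and> (\<forall>t. dist (\<phi> t y') (\<phi> (h t) z') < min \<delta> r)"
      have y'X: "y' \<in> X" and z'X: "z' \<in> X" using y' z' U'_def by auto
      define y where "y = \<phi> (-T) y'"
      define z where "z = \<phi> (h (-T)) z'"
      have yX: "y \<in> X" and zX: "z \<in> X" using F(1) y'X z'X y_def z_def by auto
      have dyx: "dist y x \<le> r" using y' y_def U'_def by auto
      have dyz: "dist y z < min \<delta> r" using hh y_def z_def by auto
      have yU: "y \<in> U" using eV yX dyx V(3) r_def rpos by auto
      have "dist z x < e" using dist_triangle[of z x y] dyx dyz r_def by (simp add: dist_commute)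
      then have zU: "z \<in> U" using eV zX V(3) by auto
      have g: "reparametrization (\<lambda>s. h (s - T) - h (- T))" using reparam_shift hh by blast
      have "\<forall>s. dist (\<phi> s y) (\<phi> ((\<lambda>s. h (s - T) - h (- T)) s) z) < \<delta>"
      proof
        fix s
        have "\<phi> s y = \<phi> (s - T) y'" using F(3)[OF y'X] y_def by simp
        moreover have "\<phi> (h (s - T) - h (- T)) z = \<phi> (h (s - T)) z'"
          using F(3)[OF z'X] z_def by simp
        ultimately show "dist (\<phi> s y) (\<phi> ((\<lambda>s. h (s - T) - h (- T)) s) z) < \<delta>"
          using hh by (metis min_less_iff_conj)
      qed
      from dH[OF yU zU g this] obtain s w where w: "w \<in> orbit \<phi> z" "y = \<phi> s w" by blast
      then obtain q where q: "w = \<phi> q z" unfolding orbit_def by auto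
      have "y' = \<phi> T y" using bk(1)[OF y'X] y_def by simp
      also have "\<dots> = \<phi> (h (-T) + q + s + T) z'"
        using w(2) q z_def F(3) z'X F(1) by (simp add: add.assoc)
      finally have "y' \<in> orbit \<phi> z'" unfolding orbit_def by auto
      then show "\<exists>s w. w \<in> orbit \<phi> z' \<and> \<bar>s\<bar> < \<epsilon> \<and> y' = \<phi> s w"
        using \<open>\<epsilon> > 0\<close> F(2)[OF y'X] by (intro exI[of _ 0] exI[of _ y']) auto
    qed
  qed
qed

end
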